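(* Let $D$ be a series-parallel digraph with source $s$, sink $t$ and travel times $\tau\ge0$, let $\boldsymbol{P}^*$ be an optimal path profile for \textsc{Min-Max Disjoint Paths} on $D$ with $k$ paths, and let $\boldsymbol{P}$ be a path profile of $k$ pairwise arc-disjoint $s$-$t$-paths in $D$ that is consistent with $\boldsymbol{P}^*$ and balanced in $D$. Then $C_{\max}(\boldsymbol{P},D)\le H_k\cdot C_{\max}(\boldsymbol{P}^*,D)$.
   Context: $H_k=\sum_{j=1}^k\frac1j$. For a path profile (tuple of pairwise arc-disjoint $s$-$t$-paths) $\boldsymbol{P}$: $\tau(P)=\sum_{a\in P}\tau_a$, $C_{\max}(\boldsymbol{P},D)=\max_{P\in\boldsymbol{P}}\tau(P)$, $\theta(\boldsymbol{P},D)=\sum_{P\in\boldsymbol{P}}\tau(P)$. $\boldsymbol{P}$ is consistent with $\boldsymbol{P}^*$ in $D$ if it has the same number $k$ of paths and $\theta(\boldsymbol{P},D)\le\theta(\boldsymbol{P}^*,D)$. If the path lengths of $\boldsymbol{P}$ are $p_1\ge\dots\ge p_k$, then $\boldsymbol{P}$ is balanced in $D$ if $\frac1i\sum_{j=1}^ip_j-p_{i+1}\le C_{\max}(\boldsymbol{P}^*,D)$ for all $i\in[k-1]$. *)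

theory Defs
  imports "HOL-Analysis.Analysis"
begin

text \<open>A digraph (possibly with parallel arcs) is given by a set of arcs E together with
  functions tl_of and hd_of giving the tail and head of every arc.\<close>

definition verts :: "('e \<Rightarrow> 'v) \<Rightarrow> ('e \<Rightarrow> 'v) \<Rightarrow> 'e set \<Rightarrow> 'v set" where
  "verts tl_of hd_of E = tl_of ` E \<union> hd_of ` E"

inductive series_parallel :: "('e \<Rightarrow> 'v) \<Rightarrow> ('e \<Rightarrow> 'v) \<Rightarrow> 'e set \<Rightarrow> 'v \<Rightarrow> 'v \<Rightarrow> bool"
  for tl_of hd_of where
  sp_arc: "\<lbrakk>tl_of e = s; hd_of e = t; s \<noteq> t\<rbrakk> \<Longrightarrow> series_parallel tl_of hd_of {e} s t"
| sp_series: "\<lbrakk>series_parallel tl_of hd_of E1 s u; series_parallel tl_of hd_of E2 u t;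
     E1 \<inter> E2 = {}; verts tl_of hd_of E1 \<inter> verts tl_of hd_of E2 = {u}\<rbrakk>
     \<Longrightarrow> series_parallel tl_of hd_of (E1 \<union> E2) s t"
| sp_parallel: "\<lbrakk>series_parallel tl_of hd_of E1 s t; series_parallel tl_of hd_of E2 s t;
     E1 \<inter> E2 = {}; verts tl_of hd_of E1 \<inter> verts tl_of hd_of E2 = {s, t}\<rbrakk>
     \<Longrightarrow> series_parallel tl_of hd_of (E1 \<union> E2) s t"

definition is_path :: "('e \<Rightarrow> 'v) \<Rightarrow> ('e \<Rightarrow> 'v) \<Rightarrow> 'e set \<Rightarrow> 'v \<Rightarrow> 'v \<Rightarrow> 'e list \<Rightarrow> bool" where
  "is_path tl_of hd_of E s t P \<longleftrightarrow>
     P \<noteq> [] \<and> set P \<subseteq> E \<and> tl_of (hd P) = s \<and> hd_of (last P) = t \<and>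
     (\<forall>i. Suc i < length P \<longrightarrow> hd_of (P ! i) = tl_of (P ! Suc i)) \<and>
     distinct (map tl_of P @ [t])"

definition path_profile :: "('e \<Rightarrow> 'v) \<Rightarrow> ('e \<Rightarrow> 'v) \<Rightarrow> 'e set \<Rightarrow> 'v \<Rightarrow> 'v \<Rightarrow> 'e list list \<Rightarrow> bool" where
  "path_profile tl_of hd_of E s t Ps \<longleftrightarrow>
     (\<forall>P\<in>set Ps. is_path tl_of hd_of E s t P) \<and>
     (\<forall>i j. i < length Ps \<and> j < length Ps \<and> i \<noteq> j \<longrightarrow> set (Ps ! i) \<inter> set (Ps ! j) = {})"

definition path_len :: "('e \<Rightarrow> real) \<Rightarrow> 'e list \<Rightarrow> real" where
  "path_len \<tau> P = (\<Sum>a\<leftarrow>P. \<tau> a)"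

definition Cmax :: "('e \<Rightarrow> real) \<Rightarrow> 'e list list \<Rightarrow> real" where
  "Cmax \<tau> Ps = (if Ps = [] then 0 else Max (set (map (path_len \<tau>) Ps)))"

definition theta :: "('e \<Rightarrow> real) \<Rightarrow> 'e list list \<Rightarrow> real" where
  "theta \<tau> Ps = (\<Sum>P\<leftarrow>Ps. path_len \<tau> P)"

definition minmax_optimal :: "('e \<Rightarrow> 'v) \<Rightarrow> ('e \<Rightarrow> 'v) \<Rightarrow> 'e set \<Rightarrow> 'v \<Rightarrow> 'v \<Rightarrow> ('e \<Rightarrow> real)
     \<Rightarrow> nat \<Rightarrow> 'e list list \<Rightarrow> bool" where
  "minmax_optimal tl_of hd_of E s t \<tau> k Ps \<longleftrightarrow>
     path_profile tl_of hd_of E s t Ps \<and> length Ps = k \<and>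
     (\<forall>Qs. path_profile tl_of hd_of E s t Qs \<and> length Qs = k \<longrightarrow> Cmax \<tau> Ps \<le> Cmax \<tau> Qs)"

definition consistent :: "('e \<Rightarrow> real) \<Rightarrow> 'e list list \<Rightarrow> 'e list list \<Rightarrow> bool" where
  "consistent \<tau> Ps Pstar \<longleftrightarrow> length Ps = length Pstar \<and> theta \<tau> Ps \<le> theta \<tau> Pstar"

text \<open>Path lengths sorted non-increasingly: p ! 0 \<ge> p ! 1 \<ge> ... (0-based indexing).\<close>
definition sorted_lens :: "('e \<Rightarrow> real) \<Rightarrow> 'e list list \<Rightarrow> real list" where
  "sorted_lens \<tau> Ps = rev (sort (map (path_len \<tau>) Ps))"

text \<open>Balanced: for all i in [k-1] (1-based), (1/i) sum_{j<=i} p_j - p_{i+1} \<le> Cmax(P*).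
  In 0-based indexing, p_{i+1} is p ! i and sum_{j<=i} p_j is sum over indices < i.\<close>
definition balanced :: "('e \<Rightarrow> real) \<Rightarrow> 'e list list \<Rightarrow> 'e list list \<Rightarrow> bool" where
  "balanced \<tau> Ps Pstar \<longleftrightarrow>
     (let p = sorted_lens \<tau> Ps in
      \<forall>i\<in>{1..<length Ps}. (\<Sum>j<i. p ! j) / real i - p ! i \<le> Cmax \<tau> Pstar)"

end

theory Submission
  imports Defs
begin

lemma arith_core:
  fixes p :: "nat \<Rightarrow> real" and C :: real and k :: nat
  assumes bal: "\<forall>i\<in>{1..<k}. (\<Sum>j<i. p j) / real i - p i \<le> C"
  shows "\<And>i. 1 \<le> i \<Longrightarrow> i \<le> k \<Longrightarrow> (\<Sum>j<i. p j) \<ge> real i * (p 0 - C * (harm i - 1))"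
proof -
  fix i :: nat
  assume "1 \<le> i" "i \<le> k"
  then show "(\<Sum>j<i. p j) \<ge> real i * (p 0 - C * (harm i - 1))"
  proof (induction i rule: dec_induct)
    case base
    then show ?case by (simp add: harm_def)
  next
    case (step n)
    have b: "(\<Sum>j<n. p j) / real n - p n \<le> C" using bal step by auto
    have n0: "real n > 0" using step by auto
    have ih: "(\<Sum>j<n. p j) \<ge> real n * (p 0 - C * (harm n - 1))" using step by simp
    have pn: "p n \<ge> (\<Sum>j<n. p j) / real n - C" using b by simp
    have hs: "harm (Suc n) = harm n + 1 / real (Suc n)" by (simp add: harm_Suc field_simps)
    have "(\<Sum>j<Suc n. p j) = (\<Sum>j<n. p j) + p n" by simp
    also have "\<dots> \<ge> (\<Sum>j<n. p j) + (\<Sum>j<n. p j) / real n - C" using pn by simp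
    finally have 1: "(\<Sum>j<Suc n. p j) \<ge> (\<Sum>j<n. p j) * (real n + 1) / real n - C"
      using n0 by (simp add: field_simps)
    have "(\<Sum>j<n. p j) * (real n + 1) / real n \<ge> real n * (p 0 - C * (harm n - 1)) * (real n + 1) / real n"
      using ih n0 by (intro divide_right_mono mult_right_mono) auto
    also have "real n * (p 0 - C * (harm n - 1)) * (real n + 1) / real n = (real n + 1) * (p 0 - C * (harm n - 1))"
      using n0 by simp
    finally have 2: "(\<Sum>j<n. p j) * (real n + 1) / real n \<ge> (real n + 1) * (p 0 - C * (harm n - 1))" .
    have 3: "real (Suc n) * (p 0 - C * (harm (Suc n) - 1)) = (real n + 1) * (p 0 - C * (harm n - 1)) - C"
      unfolding hs by (simp add: field_simps)
    show ?case using 1 2 3 by linarith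
  qed
qed

theorem lemma8:
  fixes tl_of hd_of :: "'e \<Rightarrow> 'v" and E :: "'e set" and s t :: 'v
    and \<tau> :: "'e \<Rightarrow> real" and k :: nat and P Pstar :: "'e list list"
  assumes "finite E"
    and "series_parallel tl_of hd_of E s t"
    and "\<forall>a\<in>E. \<tau> a \<ge> 0"
    and "minmax_optimal tl_of hd_of E s t \<tau> k Pstar"
    and "path_profile tl_of hd_of E s t P"
    and "length P = k"
    and "consistent \<tau> P Pstar"
    and "balanced \<tau> P Pstar"
  shows "Cmax \<tau> P \<le> harm k * Cmax \<tau> Pstar"
proof (cases "k = 0")
  case True
  then show ?thesis using assms(6) by (simp add: Cmax_def harm_def)
next
  case False
  define C where "C = Cmax \<tau> Pstar"
  define p where "p = sorted_lens \<tau> P"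
  have lenp: "length p = k" using assms(6) by (simp add: p_def sorted_lens_def)
  have lenS: "length Pstar = k" using assms(4) by (simp add: minmax_optimal_def)
  have srt: "sorted (rev p)" by (simp add: p_def sorted_lens_def)
  have setp: "set p = set (map (path_len \<tau>) P)" by (simp add: p_def sorted_lens_def)
  have sump: "sum_list p = theta \<tau> P"
    by (simp add: p_def sorted_lens_def theta_def flip: sum_mset_sum_list)
  have p0max: "\<forall>x\<in>set p. x \<le> p ! 0"
  proof
    fix x assume "x \<in> set p"
    then obtain j where j: "j < length p" "p ! j = x" by (auto simp: in_set_conv_nth)
    have "sorted_wrt (\<ge>) p" using srt by (simp add: sorted_wrt_rev)
    then show "x \<le> p ! 0" using j
      by (metis bot_nat_0.not_eq_extremum order_refl sorted_wrt_nth_less)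
  qed
  have p0in: "p ! 0 \<in> set p" using lenp False by simp
  have CP: "Cmax \<tau> P = p ! 0"
    using False assms(6) p0max p0in setp unfolding Cmax_def
    by (intro if_not_P[THEN trans] Max_eqI) auto
  have thS: "theta \<tau> Pstar \<le> real k * C"
  proof -
    have "theta \<tau> Pstar = (\<Sum>Q\<leftarrow>Pstar. path_len \<tau> Q)" by (simp add: theta_def)
    also have "\<dots> \<le> (\<Sum>Q\<leftarrow>Pstar. C)"
    proof (rule sum_list_mono)
      fix Q assume "Q \<in> set Pstar"
      then show "path_len \<tau> Q \<le> C" using lenS False unfolding C_def Cmax_def
        by (auto intro: Max_ge)
    qed
    also have "\<dots> = real k * C" using lenS by (simp add: sum_list_triv)
    finally show ?thesis .
  qed
  have sumk: "(\<Sum>j<k. p ! j) \<le> real k * C"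
  proof -
    have "(\<Sum>j<k. p ! j) = sum_list p" using lenp by (simp add: sum_list_sum_nth lessThan_atLeast0)
    also have "\<dots> \<le> theta \<tau> Pstar" using sump assms(7) by (simp add: consistent_def)
    finally show ?thesis using thS by linarith
  qed
  have bal: "\<forall>i\<in>{1..<k}. (\<Sum>j<i. p ! j) / real i - p ! i \<le> C"
    using assms(8) assms(6) unfolding balanced_def p_def C_def Let_def by simp
  have key: "(\<Sum>j<k. p ! j) \<ge> real k * (p ! 0 - C * (harm k - 1))"
    using arith_core[of k "\<lambda>j. p ! j" C, OF bal, of k] False by simp
  have "real k * (p ! 0 - C * (harm k - 1)) \<le> real k * C" using key sumk by linarith
  then have "p ! 0 - C * (harm k - 1) \<le> C" using False by simp
  then show ?thesis unfolding CP C_def[symmetric] by (simp add: algebra_simps)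
qed

end
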